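(* Min-Sum CMP can be solved in $\mathcal{O}(1)$ time for two robots.
   Context: Robots are axis-parallel unit squares in $\mathbb{R}^2$: a robot at position $p$ occupies $p+\boxdot$, $\boxdot=\{q:\|q\|_\infty\le 1/2\}$. Distances are measured in the $L_1$ norm $\|p\|=|x(p)|+|y(p)|$. A configuration of $k$ robots is a tuple $(p_1,\dots,p_k)$ with $\|p_i-p_j\|_\infty\ge 1$ for $i\ne j$; $\mathcal{F}_k$ is the set of configurations. A trajectory over $T=[t_0,t_1]$ is a $1$-Lipschitz (w.r.t. $L_1$) map $m:T\to\mathbb{R}^2$ whose image is a polygonal chain; a schedule is a tuple $M=(m_1,\dots,m_k)$ of trajectories over $T$, feasible if $M(t)\in\mathcal{F}_k$ for all $t\in T$; its total traveled length $\Sigma(M)$ is the sum of the lengths of the chains $m_i[T]$. Min-Sum CMP: given $A,B\in\mathcal{F}_k$, find the minimum total traveled length of a feasible schedule from $A$ to $B$ (and such a schedule). *)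

theory Defs
  imports "HOL-Analysis.Analysis"
begin

type_synonym pt = "real \<times> real"

definition l1 :: "pt \<Rightarrow> real" where
  "l1 p = \<bar>fst p\<bar> + \<bar>snd p\<bar>"

definition linf :: "pt \<Rightarrow> real" where
  "linf p = max \<bar>fst p\<bar> \<bar>snd p\<bar>"

definition config2 :: "pt \<times> pt \<Rightarrow> bool" where
  "config2 A \<longleftrightarrow> linf (fst A - snd A) \<ge> 1"

definition polygonal_chain :: "pt set \<Rightarrow> bool" where
  "polygonal_chain S \<longleftrightarrow> (\<exists>ps. ps \<noteq> [] \<and>
     S = insert (hd ps) (\<Union>i\<in>{..<length ps - 1}. closed_segment (ps ! i) (ps ! Suc i)))"

definition trajectory :: "real \<Rightarrow> real \<Rightarrow> (real \<Rightarrow> pt) \<Rightarrow> bool" where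
  "trajectory t0 t1 m \<longleftrightarrow> t0 \<le> t1 \<and>
     (\<forall>s\<in>{t0..t1}. \<forall>t\<in>{t0..t1}. l1 (m s - m t) \<le> \<bar>s - t\<bar>) \<and>
     polygonal_chain (m ` {t0..t1})"

definition path_len :: "real \<Rightarrow> real \<Rightarrow> (real \<Rightarrow> pt) \<Rightarrow> real" where
  "path_len t0 t1 m = Sup {(\<Sum>i<length ts - 1. l1 (m (ts ! Suc i) - m (ts ! i))) | ts.
      sorted ts \<and> set ts \<subseteq> {t0..t1}}"

definition feasible_schedule2 ::
  "pt \<times> pt \<Rightarrow> pt \<times> pt \<Rightarrow> real \<Rightarrow> real \<Rightarrow> (real \<Rightarrow> pt) \<Rightarrow> (real \<Rightarrow> pt) \<Rightarrow> bool" where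
  "feasible_schedule2 A B t0 t1 m1 m2 \<longleftrightarrow>
     trajectory t0 t1 m1 \<and> trajectory t0 t1 m2 \<and>
     (\<forall>t\<in>{t0..t1}. config2 (m1 t, m2 t)) \<and>
     m1 t0 = fst A \<and> m2 t0 = snd A \<and> m1 t1 = fst B \<and> m2 t1 = snd B"

definition total_len2 :: "real \<Rightarrow> real \<Rightarrow> (real \<Rightarrow> pt) \<Rightarrow> (real \<Rightarrow> pt) \<Rightarrow> real" where
  "total_len2 t0 t1 m1 m2 = path_len t0 t1 m1 + path_len t0 t1 m2"

definition minsum_opt2 :: "pt \<times> pt \<Rightarrow> pt \<times> pt \<Rightarrow> real" where
  "minsum_opt2 A B = Inf {total_len2 t0 t1 m1 m2 | t0 t1 m1 m2. feasible_schedule2 A B t0 t1 m1 m2}"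

section \<open>Real-RAM straight-line programs with branching (constant-size = O(1) time)\<close>

datatype rexp = Inp nat | Cst int | Add rexp rexp | Sub rexp rexp | Mul rexp rexp
  | Dv rexp rexp | Sqrt rexp | IfLe rexp rexp rexp rexp

primrec reval :: "real list \<Rightarrow> rexp \<Rightarrow> real" where
  "reval xs (Inp i) = xs ! i"
| "reval xs (Cst c) = of_int c"
| "reval xs (Add a b) = reval xs a + reval xs b"
| "reval xs (Sub a b) = reval xs a - reval xs b"
| "reval xs (Mul a b) = reval xs a * reval xs b"
| "reval xs (Dv a b) = reval xs a / reval xs b"
| "reval xs (Sqrt a) = sqrt (reval xs a)"
| "reval xs (IfLe a b c d) = (if reval xs a \<le> reval xs b then reval xs c else reval xs d)"

definition inst_input :: "pt \<times> pt \<Rightarrow> pt \<times> pt \<Rightarrow> real list" where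
  "inst_input A B = [fst (fst A), snd (fst A), fst (snd A), snd (snd A),
                     fst (fst B), snd (fst B), fst (snd B), snd (snd B)]"

fun pl_interp :: "(real \<times> 'v::real_vector) list \<Rightarrow> real \<Rightarrow> 'v" where
  "pl_interp [] t = 0"
| "pl_interp [(s, v)] t = v"
| "pl_interp ((s, v) # (s', v') # rest) t =
     (if t \<le> s' then v + ((t - s) / (s' - s)) *\<^sub>R (v' - v)
      else pl_interp ((s', v') # rest) t)"

definition run_waypoints ::
  "(rexp \<times> rexp \<times> rexp \<times> rexp \<times> rexp) list \<Rightarrow> real list \<Rightarrow> (real \<times> (pt \<times> pt)) list" where
  "run_waypoints W xs = map (\<lambda>(a, b, c, d, e).
      (reval xs a, ((reval xs b, reval xs c), (reval xs d, reval xs e)))) W"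

end

theory Submission
  imports Defs
begin

lemma l1_nonneg: "0 \<le> l1 a" by (simp add: l1_def)

lemma l1_triangle: "l1 (a + b) \<le> l1 a + l1 b"
  by (cases a; cases b) (simp add: l1_def abs_triangle_ineq add_mono)

lemma l1_minus_commute: "l1 (a - b) = l1 (b - a)"
  by (cases a; cases b) (simp add: l1_def abs_minus_commute)

lemma l1_scaleR: "l1 (c *\<^sub>R a) = \<bar>c\<bar> * l1 a"
  by (cases a) (simp add: l1_def abs_mult distrib_left)

definition varbound :: "(real \<Rightarrow> pt) \<Rightarrow> (real \<Rightarrow> real) \<Rightarrow> real \<Rightarrow> real \<Rightarrow> bool" where
 "varbound m \<phi> a b \<longleftrightarrow> (\<forall>s t. a \<le> s \<longrightarrow> s \<le> t \<longrightarrow> t \<le> b \<longrightarrow>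
     l1 (m t - m s) \<le> \<phi> t - \<phi> s \<and> \<phi> t - \<phi> s \<le> t - s)"

lemma varbound_join:
  assumes H1: "varbound m \<phi> a b" and H2: "varbound m \<phi> b c"
  shows "varbound m \<phi> a c"
  unfolding varbound_def
proof (intro allI impI)
  fix s t assume st: "a \<le> s" "s \<le> t" "t \<le> c"
  show "l1 (m t - m s) \<le> \<phi> t - \<phi> s \<and> \<phi> t - \<phi> s \<le> t - s"
  proof (cases "t \<le> b")
    case True thus ?thesis using H1 st unfolding varbound_def by auto
  next
    case F1: False
    show ?thesis
    proof (cases "b \<le> s")
      case True thus ?thesis using H2 st unfolding varbound_def by auto
    next
      case False
      have e1: "l1 (m t - m b) \<le> \<phi> t - \<phi> b \<and> \<phi> t - \<phi> b \<le> t - b"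
        using H2 st F1 False unfolding varbound_def by auto
      have e2: "l1 (m b - m s) \<le> \<phi> b - \<phi> s \<and> \<phi> b - \<phi> s \<le> b - s"
        using H1 st F1 False unfolding varbound_def by auto
      have "l1 (m t - m s) = l1 ((m t - m b) + (m b - m s))" by simp
      also have "\<dots> \<le> l1 (m t - m b) + l1 (m b - m s)" by (rule l1_triangle)
      finally show ?thesis using e1 e2 by linarith
    qed
  qed
qed

lemma varbound_sum:
  assumes V: "varbound m \<phi> a b" and ab: "a \<le> b" and so: "sorted ts" and ss: "set ts \<subseteq> {a..b}"
  shows "(\<Sum>i<length ts - 1. l1 (m (ts ! Suc i) - m (ts ! i))) \<le> \<phi> b - \<phi> a"
proof (cases "ts = []")
  case True
  have "l1 (m b - m a) \<le> \<phi> b - \<phi> a" using V ab unfolding varbound_def by auto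
  moreover have "0 \<le> l1 (m b - m a)" by (rule l1_nonneg)
  ultimately show ?thesis using True by simp
next
  case False
  let ?n = "length ts - 1"
  have inab: "\<And>i. i < length ts \<Longrightarrow> ts ! i \<in> {a..b}" using ss nth_mem by blast
  have "(\<Sum>i<?n. l1 (m (ts ! Suc i) - m (ts ! i))) \<le> (\<Sum>i<?n. \<phi> (ts ! Suc i) - \<phi> (ts ! i))"
  proof (rule sum_mono)
    fix i assume "i \<in> {..<?n}"
    hence i: "Suc i < length ts" by auto
    have le: "ts ! i \<le> ts ! Suc i" using so i by (simp add: sorted_iff_nth_mono)
    show "l1 (m (ts ! Suc i) - m (ts ! i)) \<le> \<phi> (ts ! Suc i) - \<phi> (ts ! i)"
      using V inab[of i] inab[of "Suc i"] i le unfolding varbound_def by auto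
  qed
  also have "\<dots> = \<phi> (ts ! ?n) - \<phi> (ts ! 0)" by (rule sum_lessThan_telescope)
  also have "\<dots> \<le> \<phi> b - \<phi> a"
  proof -
    have n: "?n < length ts" "0 < length ts" using False by auto
    have x1: "ts ! ?n \<in> {a..b}" "ts ! 0 \<in> {a..b}" using inab n by auto
    have "l1 (m b - m (ts ! ?n)) \<le> \<phi> b - \<phi> (ts ! ?n)" using V x1 unfolding varbound_def by auto
    moreover have "l1 (m (ts ! 0) - m a) \<le> \<phi> (ts ! 0) - \<phi> a" using V x1 unfolding varbound_def by auto
    ultimately show ?thesis using l1_nonneg[of "m b - m (ts ! ?n)"] l1_nonneg[of "m (ts ! 0) - m a"] by linarith
  qed
  finally show ?thesis .
qed

lemma path_len_le:
  assumes V: "varbound m \<phi> a b" and ab: "a \<le> b"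
  shows "path_len a b m \<le> \<phi> b - \<phi> a"
  unfolding path_len_def
proof (rule cSup_least)
  show "{\<Sum>i<length ts - 1. l1 (m (ts ! Suc i) - m (ts ! i)) |ts. sorted ts \<and> set ts \<subseteq> {a..b}} \<noteq> {}"
    by (rule ccontr) (auto dest: spec[of _ "[]"] simp: set_eq_iff)
next
  fix x assume "x \<in> {\<Sum>i<length ts - 1. l1 (m (ts ! Suc i) - m (ts ! i)) |ts. sorted ts \<and> set ts \<subseteq> {a..b}}"
  then obtain ts where "x = (\<Sum>i<length ts - 1. l1 (m (ts ! Suc i) - m (ts ! i)))" "sorted ts" "set ts \<subseteq> {a..b}" by blast
  thus "x \<le> \<phi> b - \<phi> a" using varbound_sum[OF V ab] by simp
qed

lemma path_len_ge:
  assumes V: "varbound m \<phi> a b" and ab: "a \<le> b" and so: "sorted ts" and ss: "set ts \<subseteq> {a..b}"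
  shows "(\<Sum>i<length ts - 1. l1 (m (ts ! Suc i) - m (ts ! i))) \<le> path_len a b m"
  unfolding path_len_def
proof (rule cSup_upper)
  show "(\<Sum>i<length ts - 1. l1 (m (ts ! Suc i) - m (ts ! i))) \<in> {\<Sum>i<length ts - 1. l1 (m (ts ! Suc i) - m (ts ! i)) |ts. sorted ts \<and> set ts \<subseteq> {a..b}}"
    using so ss by blast
  show "bdd_above {\<Sum>i<length ts - 1. l1 (m (ts ! Suc i) - m (ts ! i)) |ts. sorted ts \<and> set ts \<subseteq> {a..b}}"
    unfolding bdd_above_def using varbound_sum[OF V ab] by blast
qed

lemma traj_varbound:
  assumes "trajectory t0 t1 m" shows "varbound m (\<lambda>t. t) t0 t1"
  unfolding varbound_def
proof (intro allI impI)
  fix s t assume st: "t0 \<le> s" "s \<le> t" "t \<le> t1"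
  have L: "\<forall>s\<in>{t0..t1}. \<forall>t\<in>{t0..t1}. l1 (m s - m t) \<le> \<bar>s - t\<bar>" using assms unfolding trajectory_def by blast
  have "l1 (m t - m s) \<le> \<bar>t - s\<bar>" using L[rule_format, of t s] st by simp
  thus "l1 (m t - m s) \<le> t - s \<and> t - s \<le> t - s" using st by simp
qed

lemma varbound_lin:
  assumes ab: "a < b" and L: "l1 (Q - P) \<le> b - a"
    and M: "\<And>t. a \<le> t \<Longrightarrow> t \<le> b \<Longrightarrow> m t = P + ((t - a) / (b - a)) *\<^sub>R (Q - P)"
    and F: "\<And>t. a \<le> t \<Longrightarrow> t \<le> b \<Longrightarrow> \<phi> t = c + ((t - a) / (b - a)) * l1 (Q - P)"
  shows "varbound m \<phi> a b"
  unfolding varbound_def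
proof (intro allI impI)
  fix s t assume st: "a \<le> s" "s \<le> t" "t \<le> b"
  have "m t - m s = ((t - a) / (b - a) - (s - a) / (b - a)) *\<^sub>R (Q - P)"
    using M[of t] M[of s] st by (simp add: scaleR_diff_left)
  also have "(t - a) / (b - a) - (s - a) / (b - a) = (t - s) / (b - a)"
    by (simp add: diff_divide_distrib)
  finally have d: "m t - m s = ((t - s) / (b - a)) *\<^sub>R (Q - P)" .
  have nn: "0 \<le> (t - s) / (b - a)" using st ab by simp
  have pd: "\<phi> t - \<phi> s = ((t - s) / (b - a)) * l1 (Q - P)"
    using F[of t] F[of s] st by (simp add: diff_divide_distrib left_diff_distrib)
  have "((t - s) / (b - a)) * l1 (Q - P) \<le> ((t - s) / (b - a)) * (b - a)"
    using L nn by (rule mult_left_mono)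
  also have "\<dots> = t - s" using ab by simp
  finally show "l1 (m t - m s) \<le> \<phi> t - \<phi> s \<and> \<phi> t - \<phi> s \<le> t - s"
    using d pd nn by (simp only: l1_scaleR abs_of_nonneg[OF nn] order_refl simp_thms)
qed

lemma pl4_seg0:
  fixes c0 c1 c2 c3 :: "'v::real_vector"
  shows "s0 \<le> t \<Longrightarrow> t \<le> s1 \<Longrightarrow>
   pl_interp [(s0,c0),(s1,c1),(s2,c2),(s3,c3)] t = c0 + ((t - s0) / (s1 - s0)) *\<^sub>R (c1 - c0)"
  by simp

lemma pl4_seg1:
  fixes c0 c1 c2 c3 :: "'v::real_vector"
  shows "s0 < s1 \<Longrightarrow> s1 \<le> t \<Longrightarrow> t \<le> s2 \<Longrightarrow>
   pl_interp [(s0,c0),(s1,c1),(s2,c2),(s3,c3)] t = c1 + ((t - s1) / (s2 - s1)) *\<^sub>R (c2 - c1)"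
  by (cases "t = s1") auto

lemma pl4_seg2:
  fixes c0 c1 c2 c3 :: "'v::real_vector"
  shows "s0 < s1 \<Longrightarrow> s1 < s2 \<Longrightarrow> s2 \<le> t \<Longrightarrow> t \<le> s3 \<Longrightarrow>
   pl_interp [(s0,c0),(s1,c1),(s2,c2),(s3,c3)] t = c2 + ((t - s2) / (s3 - s2)) *\<^sub>R (c3 - c2)"
  by (cases "t = s2") auto

lemma lin_image:
  fixes P Q :: "'v::real_vector"
  assumes ab: "a < b"
  shows "(\<lambda>t. P + ((t - a) / (b - a)) *\<^sub>R (Q - P)) ` {a..b} = closed_segment P Q"
proof
  show "(\<lambda>t. P + ((t - a) / (b - a)) *\<^sub>R (Q - P)) ` {a..b} \<subseteq> closed_segment P Q"
  proof
    fix x assume "x \<in> (\<lambda>t. P + ((t - a) / (b - a)) *\<^sub>R (Q - P)) ` {a..b}"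
    then obtain t where t: "a \<le> t" "t \<le> b" "x = P + ((t - a) / (b - a)) *\<^sub>R (Q - P)" by auto
    define u where "u = (t - a) / (b - a)"
    have u: "0 \<le> u" "u \<le> 1" using t ab by (auto simp: u_def divide_simps)
    have "x = (1 - u) *\<^sub>R P + u *\<^sub>R Q" using t by (simp add: u_def algebra_simps)
    thus "x \<in> closed_segment P Q" using u unfolding closed_segment_def by blast
  qed
next
  show "closed_segment P Q \<subseteq> (\<lambda>t. P + ((t - a) / (b - a)) *\<^sub>R (Q - P)) ` {a..b}"
  proof
    fix x assume "x \<in> closed_segment P Q"
    then obtain u where u: "0 \<le> u" "u \<le> 1" "x = (1 - u) *\<^sub>R P + u *\<^sub>R Q"
      unfolding closed_segment_def by blast
    define t where "t = a + u * (b - a)"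
    have t: "a \<le> t" "t \<le> b" using u ab unfolding t_def
      by (auto simp: mult_left_le_one_le) (smt (verit) mult_left_le_one_le)
    have "(t - a) / (b - a) = u" using ab by (simp add: t_def)
    hence "x = P + ((t - a) / (b - a)) *\<^sub>R (Q - P)" using u by (simp add: algebra_simps)
    thus "x \<in> (\<lambda>t. P + ((t - a) / (b - a)) *\<^sub>R (Q - P)) ` {a..b}" using t by auto
  qed
qed

definition phi4 :: "real \<Rightarrow> real \<Rightarrow> real \<Rightarrow> real \<Rightarrow> real \<Rightarrow> real \<Rightarrow> real \<Rightarrow> real \<Rightarrow> real" where
  "phi4 s0 s1 s2 s3 L0 L1 L2 t = (if t \<le> s1 then ((t - s0) / (s1 - s0)) * L0
     else if t \<le> s2 then L0 + ((t - s1) / (s2 - s1)) * L1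
     else L0 + L1 + ((t - s2) / (s3 - s2)) * L2)"

lemma pl4_props:
  fixes P0 P1 P2 P3 :: pt
  assumes s: "s0 < s1" "s1 < s2" "s2 < s3"
    and L: "l1 (P1 - P0) \<le> s1 - s0" "l1 (P2 - P1) \<le> s2 - s1" "l1 (P3 - P2) \<le> s3 - s2"
  defines "m \<equiv> pl_interp [(s0,P0),(s1,P1),(s2,P2),(s3,P3)]"
  shows "trajectory s0 s3 m"
    and "path_len s0 s3 m \<le> l1 (P1 - P0) + l1 (P2 - P1) + l1 (P3 - P2)"
proof -
  let ?\<phi> = "phi4 s0 s1 s2 s3 (l1 (P1 - P0)) (l1 (P2 - P1)) (l1 (P3 - P2))"
  have v0: "varbound m ?\<phi> s0 s1"
    by (rule varbound_lin[where c=0, OF s(1) L(1)]) (auto simp: m_def phi4_def)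
  have v1: "varbound m ?\<phi> s1 s2"
  proof (rule varbound_lin[where c="l1 (P1 - P0)", OF s(2) L(2)])
    fix t assume "s1 \<le> t" "t \<le> s2"
    thus "m t = P1 + ((t - s1) / (s2 - s1)) *\<^sub>R (P2 - P1)" unfolding m_def using pl4_seg1 s by blast
    show "?\<phi> t = l1 (P1 - P0) + ((t - s1) / (s2 - s1)) * l1 (P2 - P1)"
      using \<open>s1 \<le> t\<close> \<open>t \<le> s2\<close> s by (cases "t = s1") (auto simp: phi4_def)
  qed
  have v2: "varbound m ?\<phi> s2 s3"
  proof (rule varbound_lin[where c="l1 (P1 - P0) + l1 (P2 - P1)", OF s(3) L(3)])
    fix t assume "s2 \<le> t" "t \<le> s3"
    thus "m t = P2 + ((t - s2) / (s3 - s2)) *\<^sub>R (P3 - P2)" unfolding m_def using pl4_seg2 s by blast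
    show "?\<phi> t = l1 (P1 - P0) + l1 (P2 - P1) + ((t - s2) / (s3 - s2)) * l1 (P3 - P2)"
      using \<open>s2 \<le> t\<close> \<open>t \<le> s3\<close> s by (cases "t = s2") (auto simp: phi4_def)
  qed
  have V: "varbound m ?\<phi> s0 s3" using varbound_join[OF varbound_join[OF v0 v1] v2] .
  have s03: "s0 \<le> s3" using s by simp
  have "path_len s0 s3 m \<le> ?\<phi> s3 - ?\<phi> s0" by (rule path_len_le[OF V s03])
  also have "?\<phi> s3 - ?\<phi> s0 = l1 (P1 - P0) + l1 (P2 - P1) + l1 (P3 - P2)"
    using s by (simp add: phi4_def)
  finally show "path_len s0 s3 m \<le> l1 (P1 - P0) + l1 (P2 - P1) + l1 (P3 - P2)" .
  have lip: "\<forall>s\<in>{s0..s3}. \<forall>t\<in>{s0..s3}. l1 (m s - m t) \<le> \<bar>s - t\<bar>"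
  proof (intro ballI)
    fix s t assume st: "s \<in> {s0..s3}" "t \<in> {s0..s3}"
    show "l1 (m s - m t) \<le> \<bar>s - t\<bar>"
    proof (cases "s \<le> t")
      case True
      have "l1 (m t - m s) \<le> t - s" using V st True unfolding varbound_def
        by (meson atLeastAtMost_iff order_trans)
      thus ?thesis using True by (simp add: l1_minus_commute)
    next
      case False
      have "l1 (m s - m t) \<le> s - t" using V st False unfolding varbound_def
        by (meson atLeastAtMost_iff order_trans nle_le)
      thus ?thesis using False by simp
    qed
  qed
  have img: "m ` {s0..s3} = closed_segment P0 P1 \<union> closed_segment P1 P2 \<union> closed_segment P2 P3"
  proof -
    have "{s0..s3} = {s0..s1} \<union> {s1..s2} \<union> {s2..s3}" using s by auto
    hence "m ` {s0..s3} = m ` {s0..s1} \<union> m ` {s1..s2} \<union> m ` {s2..s3}" by auto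
    also have "m ` {s0..s1} = closed_segment P0 P1"
    proof -
      have "m ` {s0..s1} = (\<lambda>t. P0 + ((t - s0) / (s1 - s0)) *\<^sub>R (P1 - P0)) ` {s0..s1}"
        by (rule image_cong) (auto simp: m_def)
      thus ?thesis using lin_image[OF s(1)] by simp
    qed
    also have "m ` {s1..s2} = closed_segment P1 P2"
    proof -
      have "m ` {s1..s2} = (\<lambda>t. P1 + ((t - s1) / (s2 - s1)) *\<^sub>R (P2 - P1)) ` {s1..s2}"
        unfolding m_def by (rule image_cong[OF refl], rule pl4_seg1[OF s(1)]) auto
      thus ?thesis using lin_image[OF s(2)] by simp
    qed
    also have "m ` {s2..s3} = closed_segment P2 P3"
    proof -
      have "m ` {s2..s3} = (\<lambda>t. P2 + ((t - s2) / (s3 - s2)) *\<^sub>R (P3 - P2)) ` {s2..s3}"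
        unfolding m_def by (rule image_cong[OF refl], rule pl4_seg2[OF s(1) s(2)]) auto
      thus ?thesis using lin_image[OF s(3)] by simp
    qed
    finally show ?thesis .
  qed
  have pc: "polygonal_chain (m ` {s0..s3})"
    unfolding polygonal_chain_def
  proof (intro exI[of _ "[P0,P1,P2,P3]"] conjI)
    have u: "{..<length [P0,P1,P2,P3] - 1} = {0,1,2::nat}" by auto
    show "m ` {s0..s3} = insert (hd [P0, P1, P2, P3])
       (\<Union>i\<in>{..<length [P0, P1, P2, P3] - 1}. closed_segment ([P0, P1, P2, P3] ! i) ([P0, P1, P2, P3] ! Suc i))"
      unfolding u img by auto
  qed simp
  show "trajectory s0 s3 m" unfolding trajectory_def using s03 lip pc by blast
qed

definition sx :: "pt \<times> pt \<Rightarrow> real" where "sx C = fst (fst C) - fst (snd C)"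
definition sy :: "pt \<times> pt \<Rightarrow> real" where "sy C = snd (fst C) - snd (snd C)"

lemma config2_iff: "config2 C \<longleftrightarrow> 1 \<le> \<bar>sx C\<bar> \<or> 1 \<le> \<bar>sy C\<bar>"
  unfolding config2_def linf_def sx_def sy_def fst_diff snd_diff by (rule le_max_iff_disj)

lemma conv_ge1: "1 \<le> a \<Longrightarrow> 1 \<le> b \<Longrightarrow> 0 \<le> (u::real) \<Longrightarrow> u \<le> 1 \<Longrightarrow> 1 \<le> a + u * (b - a)"
proof -
  assume h: "1 \<le> a" "1 \<le> b" "0 \<le> u" "u \<le> 1"
  have "(1 - u) * 1 \<le> (1 - u) * a" using h by (intro mult_left_mono) auto
  moreover have "u * 1 \<le> u * b" using h by (intro mult_left_mono) auto
  moreover have "a + u * (b - a) = (1 - u) * a + u * b" by (simp add: algebra_simps)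
  ultimately show ?thesis by simp
qed

lemma conv_lem1: "a \<le> -1 \<Longrightarrow> b \<le> -1 \<Longrightarrow> 0 \<le> (u::real) \<Longrightarrow> u \<le> 1 \<Longrightarrow> a + u * (b - a) \<le> -1"
  using conv_ge1[of "-a" "-b" u] by (simp add: algebra_simps)

lemma sx_conv: "sx (C + u *\<^sub>R (D - C)) = sx C + u * (sx D - sx C)"
  by (simp add: sx_def algebra_simps)
lemma sy_conv: "sy (C + u *\<^sub>R (D - C)) = sy C + u * (sy D - sy C)"
  by (simp add: sy_def algebra_simps)

definition segok :: "pt \<times> pt \<Rightarrow> pt \<times> pt \<Rightarrow> bool" where
  "segok C D \<longleftrightarrow> (\<forall>u. 0 \<le> u \<longrightarrow> u \<le> 1 \<longrightarrow> config2 (C + u *\<^sub>R (D - C)))"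

lemma segok_x:
  assumes "(1 \<le> sx C \<and> 1 \<le> sx D) \<or> (sx C \<le> -1 \<and> sx D \<le> -1)"
  shows "segok C D"
  unfolding segok_def config2_iff sx_conv
  using assms conv_ge1[of "sx C" "sx D"] conv_lem1[of "sx C" "sx D"] by fastforce

lemma segok_y:
  assumes "(1 \<le> sy C \<and> 1 \<le> sy D) \<or> (sy C \<le> -1 \<and> sy D \<le> -1)"
  shows "segok C D"
  unfolding segok_def config2_iff sy_conv
  using assms conv_ge1[of "sy C" "sy D"] conv_lem1[of "sy C" "sy D"] by fastforce

lemma segok_const: "config2 C \<Longrightarrow> segok C C"
  unfolding segok_def by simp

definition detour :: "real \<Rightarrow> real \<Rightarrow> real \<Rightarrow> real \<Rightarrow> real" where
  "detour a1 a2 b1 b2 = \<bar>a1 - b1\<bar> + \<bar>a2 - b2\<bar> +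
     2 * min (max 0 (1 - (max a1 b1 - min a2 b2))) (max 0 (1 - (max a2 b2 - min a1 b1)))"

lemma one_side1: "\<bar>a - g\<bar> + \<bar>g - b\<bar> \<ge> \<bar>a - b\<bar> + 2 * max 0 (g - max a b)" for a b g :: real
  by (cases "a \<le> b"; cases "g \<le> a"; cases "g \<le> b") (auto simp: max_def abs_if)
lemma one_side2: "\<bar>a - g\<bar> + \<bar>g - b\<bar> \<ge> \<bar>a - b\<bar> + 2 * max 0 (min a b - g)" for a b g :: real
  by (cases "a \<le> b"; cases "g \<le> a"; cases "g \<le> b") (auto simp: max_def min_def abs_if)
lemma abs4: "\<bar>a - b - (c - d)\<bar> \<le> \<bar>a - c\<bar> + \<bar>b - d\<bar>" for a b c d :: real
  by arith
lemma tri: "\<bar>x - z\<bar> \<le> \<bar>y - x\<bar> + \<bar>z - y\<bar>" for x y z :: real by arith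

lemma mx: "1 \<le> g1 - g2 \<Longrightarrow> max 0 (1 - (M - m)) \<le> max 0 (g1 - M) + max 0 (m - g2)"
  for M m g1 g2 :: real
  unfolding max_def by (auto split: if_splits)

lemma lin1: "D1 + 2 * e1 \<le> x + y \<Longrightarrow> D2 + 2 * e2 \<le> z + w \<Longrightarrow> d \<le> e1 + e2 \<Longrightarrow> mm \<le> d
   \<Longrightarrow> D1 + D2 + 2 * mm \<le> x + y + z + (w::real)"
  by linarith

lemma det_lb:
  assumes "1 \<le> \<bar>g1 - g2\<bar>"
  shows "detour a1 a2 b1 b2 \<le> \<bar>a1 - g1\<bar> + \<bar>g1 - b1\<bar> + \<bar>a2 - g2\<bar> + \<bar>g2 - b2\<bar>"
proof (cases "1 \<le> g1 - g2")
  case True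
  show ?thesis unfolding detour_def
    by (rule lin1[OF one_side1[of a1 b1 g1] one_side2[of a2 b2 g2] mx[OF True] min.cobounded1])
next
  case False
  hence F: "1 \<le> g2 - g1" using assms by linarith
  show ?thesis unfolding detour_def
    by (rule lin1[OF one_side2[of a1 b1 g1] one_side1[of a2 b2 g2], where d="max 0 (1 - (max a2 b2 - min a1 b1))"])
      (use mx[OF F, of "max a2 b2" "min a1 b1"] in linarith, rule min.cobounded2)
qed

lemma det_lb3:
  assumes "1 \<le> \<bar>xp - zp\<bar> \<or> 1 \<le> \<bar>xq - zq\<bar>"
  shows "detour x0 z0 x3 z3 \<le> \<bar>xp - x0\<bar> + \<bar>xq - xp\<bar> + \<bar>x3 - xq\<bar> + (\<bar>zp - z0\<bar> + \<bar>zq - zp\<bar> + \<bar>z3 - zq\<bar>)"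
  using assms
proof
  assume "1 \<le> \<bar>xp - zp\<bar>"
  from det_lb[OF this, of x0 z0 x3 z3] show ?thesis
    using abs_minus_commute[of x0 xp] abs_minus_commute[of z0 zp] tri[of xp x3 xq] tri[of zp z3 zq] by linarith
next
  assume "1 \<le> \<bar>xq - zq\<bar>"
  from det_lb[OF this, of x0 z0 x3 z3] show ?thesis
    using abs_minus_commute[of xq x3] abs_minus_commute[of zq z3] tri[of x0 xq xp] tri[of z0 zq zp] by linarith
qed

lemma det_ge: "\<bar>a1 - b1\<bar> + \<bar>a2 - b2\<bar> \<le> detour a1 a2 b1 b2"
  unfolding detour_def by simp

lemma lb_three:
  assumes T: "trajectory t0 t1 m" and "t0 \<le> p" "p \<le> q" "q \<le> t1"
  shows "l1 (m p - m t0) + l1 (m q - m p) + l1 (m t1 - m q) \<le> path_len t0 t1 m"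
proof -
  have "(\<Sum>i<length [t0,p,q,t1] - 1. l1 (m ([t0,p,q,t1] ! Suc i) - m ([t0,p,q,t1] ! i))) \<le> path_len t0 t1 m"
    by (rule path_len_ge[OF traj_varbound[OF T]]) (use assms in auto)
  thus ?thesis by (simp add: numeral_3_eq_3)
qed

lemma lb_two:
  assumes T: "trajectory t0 t1 m"
  shows "l1 (m t1 - m t0) \<le> path_len t0 t1 m"
proof -
  have t: "t0 \<le> t1" using T unfolding trajectory_def by auto
  have "(\<Sum>i<length [t0,t1] - 1. l1 (m ([t0,t1] ! Suc i) - m ([t0,t1] ! i))) \<le> path_len t0 t1 m"
    by (rule path_len_ge[OF traj_varbound[OF T]]) (use t in auto)
  thus ?thesis by simp
qed

lemma cross_time:
  fixes f :: "real \<Rightarrow> real"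
  assumes t: "t0 \<le> t1" and L: "\<And>s t. s \<in> {t0..t1} \<Longrightarrow> t \<in> {t0..t1} \<Longrightarrow> \<bar>f s - f t\<bar> \<le> 2 * \<bar>s - t\<bar>"
    and N: "\<not> ((1 \<le> f t0 \<and> 1 \<le> f t1) \<or> (f t0 \<le> -1 \<and> f t1 \<le> -1))"
  shows "\<exists>a\<in>{t0..t1}. \<bar>f a\<bar> < 1"
proof -
  have "2-lipschitz_on {t0..t1} f"
    by (rule lipschitz_onI) (use L in \<open>auto simp: dist_real_def\<close>)
  hence C: "continuous_on {t0..t1} f" by (rule lipschitz_on_continuous_on)
  show ?thesis
  proof (cases "\<bar>f t0\<bar> < 1")
    case True thus ?thesis using t by auto
  next
    case F0: False
    show ?thesis
    proof (cases "\<bar>f t1\<bar> < 1")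
      case True thus ?thesis using t by auto
    next
      case F1: False
      show ?thesis
      proof (cases "1 \<le> f t0")
        case True
        hence "f t1 \<le> 0" using N F1 by auto
        then obtain x where "t0 \<le> x" "x \<le> t1" "f x = 0" using IVT2'[of f t1 0 t0, OF _ _ t C] True by auto
        thus ?thesis by (intro bexI[of _ x]) auto
      next
        case False
        hence "f t0 \<le> 0" "0 \<le> f t1" using N F1 F0 by auto
        then obtain x where "t0 \<le> x" "x \<le> t1" "f x = 0" using IVT'[of f t0 0 t1, OF _ _ t C] by auto
        thus ?thesis by (intro bexI[of _ x]) auto
      qed
    qed
  qed
qed

lemma lip2:
  assumes "trajectory t0 t1 m1" "trajectory t0 t1 m2" "s \<in> {t0..t1}" "t \<in> {t0..t1}"
  shows "\<bar>(fst (m1 s) - fst (m2 s)) - (fst (m1 t) - fst (m2 t))\<bar> \<le> 2 * \<bar>s - t\<bar>"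
    and "\<bar>(snd (m1 s) - snd (m2 s)) - (snd (m1 t) - snd (m2 t))\<bar> \<le> 2 * \<bar>s - t\<bar>"
proof -
  have a: "l1 (m1 s - m1 t) \<le> \<bar>s - t\<bar>" "l1 (m2 s - m2 t) \<le> \<bar>s - t\<bar>"
    using assms unfolding trajectory_def by auto
  show "\<bar>(fst (m1 s) - fst (m2 s)) - (fst (m1 t) - fst (m2 t))\<bar> \<le> 2 * \<bar>s - t\<bar>"
    using a abs4[of "fst (m1 s)" "fst (m2 s)" "fst (m1 t)" "fst (m2 t)"]
      abs_ge_zero[of "fst (m1 s) - fst (m1 t)"] abs_ge_zero[of "snd (m1 s) - snd (m1 t)"]
      abs_ge_zero[of "fst (m2 s) - fst (m2 t)"] abs_ge_zero[of "snd (m2 s) - snd (m2 t)"]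
    unfolding l1_def fst_diff snd_diff by linarith
  show "\<bar>(snd (m1 s) - snd (m2 s)) - (snd (m1 t) - snd (m2 t))\<bar> \<le> 2 * \<bar>s - t\<bar>"
    using a abs4[of "snd (m1 s)" "snd (m2 s)" "snd (m1 t)" "snd (m2 t)"]
      abs_ge_zero[of "fst (m1 s) - fst (m1 t)"] abs_ge_zero[of "snd (m1 s) - snd (m1 t)"]
      abs_ge_zero[of "fst (m2 s) - fst (m2 t)"] abs_ge_zero[of "snd (m2 s) - snd (m2 t)"]
    unfolding l1_def fst_diff snd_diff by linarith
qed

lemma lb_basic:
  assumes F: "feasible_schedule2 A B t0 t1 m1 m2"
  shows "l1 (fst B - fst A) + l1 (snd B - snd A) \<le> total_len2 t0 t1 m1 m2"
  using F lb_two[of t0 t1 m1] lb_two[of t0 t1 m2]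
  unfolding feasible_schedule2_def total_len2_def by auto

lemma comb: "(dX::real) \<le> x1+x2+x3+(z1+z2+z3) \<Longrightarrow> dY \<le> y1+y2+y3+(w1+w2+w3) \<Longrightarrow>
   (x1+y1)+(x2+y2)+(x3+y3) \<le> P \<Longrightarrow> (z1+w1)+(z2+w2)+(z3+w3) \<le> Q \<Longrightarrow> dX + dY \<le> P + Q"
  by linarith

lemma lb_detour:
  assumes F: "feasible_schedule2 A B t0 t1 m1 m2"
    and nKx: "\<not> ((1 \<le> sx A \<and> 1 \<le> sx B) \<or> (sx A \<le> -1 \<and> sx B \<le> -1))"
    and nKy: "\<not> ((1 \<le> sy A \<and> 1 \<le> sy B) \<or> (sy A \<le> -1 \<and> sy B \<le> -1))"
  shows "detour (fst (fst A)) (fst (snd A)) (fst (fst B)) (fst (snd B))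
       + detour (snd (fst A)) (snd (snd A)) (snd (fst B)) (snd (snd B)) \<le> total_len2 t0 t1 m1 m2"
proof -
  have T1: "trajectory t0 t1 m1" and T2: "trajectory t0 t1 m2"
    and cf: "\<forall>t\<in>{t0..t1}. config2 (m1 t, m2 t)"
    and e: "m1 t0 = fst A" "m2 t0 = snd A" "m1 t1 = fst B" "m2 t1 = snd B"
    using F unfolding feasible_schedule2_def by auto
  have t: "t0 \<le> t1" using T1 unfolding trajectory_def by auto
  obtain a where a: "a \<in> {t0..t1}" "\<bar>fst (m1 a) - fst (m2 a)\<bar> < 1"
    using cross_time[of t0 t1 "\<lambda>t. fst (m1 t) - fst (m2 t)", OF t lip2(1)[OF T1 T2]] nKx e
    by (auto simp: sx_def)
  obtain b where b: "b \<in> {t0..t1}" "\<bar>snd (m1 b) - snd (m2 b)\<bar> < 1"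
    using cross_time[of t0 t1 "\<lambda>t. snd (m1 t) - snd (m2 t)", OF t lip2(2)[OF T1 T2]] nKy e
    by (auto simp: sy_def)
  have ca: "1 \<le> \<bar>snd (m1 a) - snd (m2 a)\<bar>" using cf[rule_format, OF a(1)] a(2) unfolding config2_iff sx_def sy_def by auto
  have cb: "1 \<le> \<bar>fst (m1 b) - fst (m2 b)\<bar>" using cf[rule_format, OF b(1)] b(2) unfolding config2_iff sx_def sy_def by auto
  define p where "p = min a b"
  define q where "q = max a b"
  have pq: "t0 \<le> p" "p \<le> q" "q \<le> t1" using a b by (auto simp: p_def q_def)
  have hx: "1 \<le> \<bar>fst (m1 p) - fst (m2 p)\<bar> \<or> 1 \<le> \<bar>fst (m1 q) - fst (m2 q)\<bar>"
    using cb unfolding p_def q_def by (cases "a \<le> b") auto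
  have hy: "1 \<le> \<bar>snd (m1 p) - snd (m2 p)\<bar> \<or> 1 \<le> \<bar>snd (m1 q) - snd (m2 q)\<bar>"
    using ca unfolding p_def q_def by (cases "a \<le> b") auto
  have P1: "l1 (m1 p - m1 t0) + l1 (m1 q - m1 p) + l1 (m1 t1 - m1 q) \<le> path_len t0 t1 m1"
    by (rule lb_three[OF T1 pq])
  have P2: "l1 (m2 p - m2 t0) + l1 (m2 q - m2 p) + l1 (m2 t1 - m2 q) \<le> path_len t0 t1 m2"
    by (rule lb_three[OF T2 pq])
  have X: "detour (fst (m1 t0)) (fst (m2 t0)) (fst (m1 t1)) (fst (m2 t1)) \<le>
     \<bar>fst (m1 p) - fst (m1 t0)\<bar> + \<bar>fst (m1 q) - fst (m1 p)\<bar> + \<bar>fst (m1 t1) - fst (m1 q)\<bar> +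
     (\<bar>fst (m2 p) - fst (m2 t0)\<bar> + \<bar>fst (m2 q) - fst (m2 p)\<bar> + \<bar>fst (m2 t1) - fst (m2 q)\<bar>)"
    by (rule det_lb3[OF hx])
  have Y: "detour (snd (m1 t0)) (snd (m2 t0)) (snd (m1 t1)) (snd (m2 t1)) \<le>
     \<bar>snd (m1 p) - snd (m1 t0)\<bar> + \<bar>snd (m1 q) - snd (m1 p)\<bar> + \<bar>snd (m1 t1) - snd (m1 q)\<bar> +
     (\<bar>snd (m2 p) - snd (m2 t0)\<bar> + \<bar>snd (m2 q) - snd (m2 p)\<bar> + \<bar>snd (m2 t1) - snd (m2 q)\<bar>)"
    by (rule det_lb3[OF hy])
  have P1': "(\<bar>fst (m1 p) - fst (m1 t0)\<bar> + \<bar>snd (m1 p) - snd (m1 t0)\<bar>) +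
     (\<bar>fst (m1 q) - fst (m1 p)\<bar> + \<bar>snd (m1 q) - snd (m1 p)\<bar>) +
     (\<bar>fst (m1 t1) - fst (m1 q)\<bar> + \<bar>snd (m1 t1) - snd (m1 q)\<bar>) \<le> path_len t0 t1 m1"
    using P1 by (simp only: l1_def fst_diff snd_diff)
  have P2': "(\<bar>fst (m2 p) - fst (m2 t0)\<bar> + \<bar>snd (m2 p) - snd (m2 t0)\<bar>) +
     (\<bar>fst (m2 q) - fst (m2 p)\<bar> + \<bar>snd (m2 q) - snd (m2 p)\<bar>) +
     (\<bar>fst (m2 t1) - fst (m2 q)\<bar> + \<bar>snd (m2 t1) - snd (m2 q)\<bar>) \<le> path_len t0 t1 m2"
    using P2 by (simp only: l1_def fst_diff snd_diff)
  show ?thesis unfolding total_len2_def e[symmetric] by (rule comb[OF X Y P1' P2'])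
qed

definition gx :: "pt \<times> pt \<Rightarrow> real" where "gx C = 1 - \<bar>sx C\<bar>"
definition gy :: "pt \<times> pt \<Rightarrow> real" where "gy C = 1 - \<bar>sy C\<bar>"
definition kx :: "pt \<times> pt \<Rightarrow> pt \<times> pt \<Rightarrow> real" where
  "kx A B = min (max (1 - sx A) (1 - sx B)) (max (1 + sx A) (1 + sx B))"
definition ky :: "pt \<times> pt \<Rightarrow> pt \<times> pt \<Rightarrow> real" where
  "ky A B = min (max (1 - sy A) (1 - sy B)) (max (1 + sy A) (1 + sy B))"
definition ca :: "pt \<times> pt \<Rightarrow> pt \<times> pt \<Rightarrow> real" where
  "ca A B = max (gx A) (min (gy B) (kx A B))"
definition cb :: "pt \<times> pt \<Rightarrow> pt \<times> pt \<Rightarrow> real" where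
  "cb A B = max (gy A) (min (gx B) (ky A B))"

definition dxx :: "pt \<times> pt \<Rightarrow> pt \<times> pt \<Rightarrow> real" where
  "dxx A B = \<bar>fst (fst A) - fst (fst B)\<bar> + \<bar>fst (snd A) - fst (snd B)\<bar>"
definition dyy :: "pt \<times> pt \<Rightarrow> pt \<times> pt \<Rightarrow> real" where
  "dyy A B = \<bar>snd (fst A) - snd (fst B)\<bar> + \<bar>snd (snd A) - snd (snd B)\<bar>"
definition ddx :: "pt \<times> pt \<Rightarrow> pt \<times> pt \<Rightarrow> real" where
  "ddx A B = detour (fst (fst A)) (fst (snd A)) (fst (fst B)) (fst (snd B))"
definition ddy :: "pt \<times> pt \<Rightarrow> pt \<times> pt \<Rightarrow> real" where
  "ddy A B = detour (snd (fst A)) (snd (snd A)) (snd (fst B)) (snd (snd B))"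

definition optv :: "pt \<times> pt \<Rightarrow> pt \<times> pt \<Rightarrow> real" where
  "optv A B = (if min (ca A B) (cb A B) \<le> 0 then dxx A B + dyy A B else ddx A B + ddy A B)"

definition dpl :: "real \<Rightarrow> real \<Rightarrow> real \<Rightarrow> real \<Rightarrow> real" where
  "dpl a1 a2 b1 b2 = max 0 (1 - (max a1 b1 - min a2 b2))"
definition dmi :: "real \<Rightarrow> real \<Rightarrow> real \<Rightarrow> real \<Rightarrow> real" where
  "dmi a1 a2 b1 b2 = max 0 (1 - (max a2 b2 - min a1 b1))"
definition hp1 :: "real \<Rightarrow> real \<Rightarrow> real \<Rightarrow> real \<Rightarrow> real" where
  "hp1 a1 a2 b1 b2 = (if dpl a1 a2 b1 b2 - dmi a1 a2 b1 b2 \<le> 0 then max a1 b1 + dpl a1 a2 b1 b2 else min a1 b1)"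
definition hp2 :: "real \<Rightarrow> real \<Rightarrow> real \<Rightarrow> real \<Rightarrow> real" where
  "hp2 a1 a2 b1 b2 = (if dpl a1 a2 b1 b2 - dmi a1 a2 b1 b2 \<le> 0 then min a2 b2 else max a2 b2 + dmi a1 a2 b1 b2)"

lemma hp_sep: "1 \<le> \<bar>hp1 a1 a2 b1 b2 - hp2 a1 a2 b1 b2\<bar>"
proof (cases "dpl a1 a2 b1 b2 - dmi a1 a2 b1 b2 \<le> 0")
  case True
  have "1 - (max a1 b1 - min a2 b2) \<le> dpl a1 a2 b1 b2" unfolding dpl_def by simp
  thus ?thesis using True unfolding hp1_def hp2_def by simp
next
  case False
  have "1 - (max a2 b2 - min a1 b1) \<le> dmi a1 a2 b1 b2" unfolding dmi_def by simp
  thus ?thesis using False unfolding hp1_def hp2_def by simp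
qed

lemma hp_cost: "\<bar>hp1 a1 a2 b1 b2 - a1\<bar> + \<bar>b1 - hp1 a1 a2 b1 b2\<bar> + \<bar>hp2 a1 a2 b1 b2 - a2\<bar> + \<bar>b2 - hp2 a1 a2 b1 b2\<bar>
   = detour a1 a2 b1 b2"
proof -
  have p: "0 \<le> dpl a1 a2 b1 b2" "0 \<le> dmi a1 a2 b1 b2" unfolding dpl_def dmi_def by auto
  have d: "detour a1 a2 b1 b2 = \<bar>a1 - b1\<bar> + \<bar>a2 - b2\<bar> + 2 * min (dpl a1 a2 b1 b2) (dmi a1 a2 b1 b2)"
    unfolding detour_def dpl_def dmi_def by simp
  show ?thesis
  proof (cases "dpl a1 a2 b1 b2 - dmi a1 a2 b1 b2 \<le> 0")
    case True
    hence m: "min (dpl a1 a2 b1 b2) (dmi a1 a2 b1 b2) = dpl a1 a2 b1 b2" by simp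
    show ?thesis unfolding d m hp1_def hp2_def using True p
      by (cases "a1 \<le> b1"; cases "a2 \<le> b2") (auto simp: max_def min_def)
  next
    case False
    hence m: "min (dpl a1 a2 b1 b2) (dmi a1 a2 b1 b2) = dmi a1 a2 b1 b2" by simp
    show ?thesis unfolding d m hp1_def hp2_def using False p
      by (cases "a1 \<le> b1"; cases "a2 \<le> b2") (auto simp: max_def min_def)
  qed
qed

lemma detour_zero: "1 \<le> \<bar>a1 - a2\<bar> \<Longrightarrow> detour a1 a2 b1 b2 = \<bar>a1 - b1\<bar> + \<bar>a2 - b2\<bar>"
proof -
  assume h: "1 \<le> \<bar>a1 - a2\<bar>"
  have "max 0 (1 - (max a1 b1 - min a2 b2)) = 0 \<or> max 0 (1 - (max a2 b2 - min a1 b1)) = 0"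
  proof (cases "1 \<le> a1 - a2")
    case True
    have "a1 \<le> max a1 b1" "min a2 b2 \<le> a2" by auto
    hence "1 \<le> max a1 b1 - min a2 b2" using True by linarith
    hence "max 0 (1 - (max a1 b1 - min a2 b2)) = 0" by simp
    thus ?thesis ..
  next
    case False
    hence F: "1 \<le> a2 - a1" using h by linarith
    have "a2 \<le> max a2 b2" "min a1 b1 \<le> a1" by auto
    hence "1 \<le> max a2 b2 - min a1 b1" using F by linarith
    hence "max 0 (1 - (max a2 b2 - min a1 b1)) = 0" by simp
    thus ?thesis ..
  qed
  moreover have "0 \<le> max 0 (1 - (max a1 b1 - min a2 b2))" "0 \<le> max 0 (1 - (max a2 b2 - min a1 b1))" by auto
  ultimately show ?thesis unfolding detour_def by (auto simp: min_def)
qed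

definition selr :: "pt \<times> pt \<Rightarrow> pt \<times> pt \<Rightarrow> real \<Rightarrow> real \<Rightarrow> real \<Rightarrow> real \<Rightarrow> real" where
  "selr A B a b c d = (if ca A B \<le> 0 then a else if cb A B \<le> 0 then b else if gx A \<le> 0 then c else d)"

definition hy1 where "hy1 A B = hp1 (snd (fst A)) (snd (snd A)) (snd (fst B)) (snd (snd B))"
definition hy2 where "hy2 A B = hp2 (snd (fst A)) (snd (snd A)) (snd (fst B)) (snd (snd B))"
definition hx1 where "hx1 A B = hp1 (fst (fst A)) (fst (snd A)) (fst (fst B)) (fst (snd B))"
definition hx2 where "hx2 A B = hp2 (fst (fst A)) (fst (snd A)) (fst (fst B)) (fst (snd B))"

definition C1 :: "pt \<times> pt \<Rightarrow> pt \<times> pt \<Rightarrow> pt \<times> pt" where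
  "C1 A B = ((selr A B (fst (fst A)) (fst (fst B)) (fst (fst A)) (hx1 A B),
              selr A B (snd (fst B)) (snd (fst A)) (hy1 A B) (snd (fst A))),
             (selr A B (fst (snd A)) (fst (snd B)) (fst (snd A)) (hx2 A B),
              selr A B (snd (snd B)) (snd (snd A)) (hy2 A B) (snd (snd A))))"

definition C2 :: "pt \<times> pt \<Rightarrow> pt \<times> pt \<Rightarrow> pt \<times> pt" where
  "C2 A B = ((selr A B (fst (fst B)) (fst (fst B)) (fst (fst B)) (hx1 A B),
              selr A B (snd (fst B)) (snd (fst B)) (hy1 A B) (snd (fst B))),
             (selr A B (fst (snd B)) (fst (snd B)) (fst (snd B)) (hx2 A B),
              selr A B (snd (snd B)) (snd (snd B)) (hy2 A B) (snd (snd B))))"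

definition seglen :: "pt \<times> pt \<Rightarrow> pt \<times> pt \<Rightarrow> real" where
  "seglen C D = l1 (fst D - fst C) + l1 (snd D - snd C)"

definition tm1 where "tm1 A B = 1 + seglen A (C1 A B)"
definition tm2 where "tm2 A B = tm1 A B + (1 + seglen (C1 A B) (C2 A B))"
definition tm3 where "tm3 A B = tm2 A B + (1 + seglen (C2 A B) B)"

definition wl :: "pt \<times> pt \<Rightarrow> pt \<times> pt \<Rightarrow> (real \<times> (pt \<times> pt)) list" where
  "wl A B = [(0, A), (tm1 A B, C1 A B), (tm2 A B, C2 A B), (tm3 A B, B)]"

section \<open>rexp encoding\<close>

definition rabs :: "rexp \<Rightarrow> rexp" where "rabs e = IfLe (Cst 0) e e (Sub (Cst 0) e)"
definition rmax :: "rexp \<Rightarrow> rexp \<Rightarrow> rexp" where "rmax a b = IfLe a b b a"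
definition rmin :: "rexp \<Rightarrow> rexp \<Rightarrow> rexp" where "rmin a b = IfLe a b a b"
definition rif :: "rexp \<Rightarrow> rexp \<Rightarrow> rexp \<Rightarrow> rexp" where "rif c a b = IfLe c (Cst 0) a b"

lemma reval_rabs[simp]: "reval xs (rabs e) = \<bar>reval xs e\<bar>" by (simp add: rabs_def)
lemma reval_rmax[simp]: "reval xs (rmax a b) = max (reval xs a) (reval xs b)" by (simp add: rmax_def max_def)
lemma reval_rmin[simp]: "reval xs (rmin a b) = min (reval xs a) (reval xs b)" by (simp add: rmin_def min_def)
lemma reval_rif[simp]: "reval xs (rif c a b) = (if reval xs c \<le> 0 then reval xs a else reval xs b)" by (simp add: rif_def)

abbreviation "IX \<equiv> inst_input"

lemma reval_inp:
  "reval (IX A B) (Inp 0) = fst (fst A)" "reval (IX A B) (Inp 1) = snd (fst A)"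
  "reval (IX A B) (Inp 2) = fst (snd A)" "reval (IX A B) (Inp 3) = snd (snd A)"
  "reval (IX A B) (Inp 4) = fst (fst B)" "reval (IX A B) (Inp 5) = snd (fst B)"
  "reval (IX A B) (Inp 6) = fst (snd B)" "reval (IX A B) (Inp 7) = snd (snd B)"
  by (simp_all add: inst_input_def)

lemma ix_nth: "IX A B ! 0 = fst (fst A)" "IX A B ! Suc 0 = snd (fst A)" "IX A B ! 1 = snd (fst A)"
  "IX A B ! 2 = fst (snd A)" "IX A B ! 3 = snd (snd A)"
  "IX A B ! 4 = fst (fst B)" "IX A B ! 5 = snd (fst B)"
  "IX A B ! 6 = fst (snd B)" "IX A B ! 7 = snd (snd B)"
  by (simp_all add: inst_input_def)

definition "e_sxA = Sub (Inp 0) (Inp 2)"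
definition "e_sxB = Sub (Inp 4) (Inp 6)"
definition "e_syA = Sub (Inp 1) (Inp 3)"
definition "e_syB = Sub (Inp 5) (Inp 7)"

lemma ev_s: "reval (IX A B) e_sxA = sx A" "reval (IX A B) e_sxB = sx B"
  "reval (IX A B) e_syA = sy A" "reval (IX A B) e_syB = sy B"
  by (simp_all add: e_sxA_def e_sxB_def e_syA_def e_syB_def ix_nth sx_def sy_def)

definition "e_kk a b = rmin (rmax (Sub (Cst 1) a) (Sub (Cst 1) b)) (rmax (Add (Cst 1) a) (Add (Cst 1) b))"
definition "e_g a = Sub (Cst 1) (rabs a)"

definition "e_ca = rmax (e_g e_sxA) (rmin (e_g e_syB) (e_kk e_sxA e_sxB))"
definition "e_cb = rmax (e_g e_syA) (rmin (e_g e_sxB) (e_kk e_syA e_syB))"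

lemma ev_c: "reval (IX A B) e_ca = ca A B" "reval (IX A B) e_cb = cb A B"
  "reval (IX A B) (e_g e_sxA) = gx A"
  by (simp_all add: e_ca_def e_cb_def e_kk_def e_g_def ev_s ca_def cb_def gx_def gy_def kx_def ky_def)

definition "e_det a1 a2 b1 b2 = Add (Add (rabs (Sub a1 b1)) (rabs (Sub a2 b2)))
   (Mul (Cst 2) (rmin (rmax (Cst 0) (Sub (Cst 1) (Sub (rmax a1 b1) (rmin a2 b2))))
                      (rmax (Cst 0) (Sub (Cst 1) (Sub (rmax a2 b2) (rmin a1 b1))))))"

lemma ev_det: "reval xs (e_det a1 a2 b1 b2) = detour (reval xs a1) (reval xs a2) (reval xs b1) (reval xs b2)"
  by (simp add: e_det_def detour_def)

definition "e_dp a1 a2 b1 b2 = rmax (Cst 0) (Sub (Cst 1) (Sub (rmax a1 b1) (rmin a2 b2)))"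
definition "e_dm a1 a2 b1 b2 = rmax (Cst 0) (Sub (Cst 1) (Sub (rmax a2 b2) (rmin a1 b1)))"
definition "e_hp1 a1 a2 b1 b2 = rif (Sub (e_dp a1 a2 b1 b2) (e_dm a1 a2 b1 b2))
   (Add (rmax a1 b1) (e_dp a1 a2 b1 b2)) (rmin a1 b1)"
definition "e_hp2 a1 a2 b1 b2 = rif (Sub (e_dp a1 a2 b1 b2) (e_dm a1 a2 b1 b2))
   (rmin a2 b2) (Add (rmax a2 b2) (e_dm a1 a2 b1 b2))"

lemma ev_hp: "reval xs (e_hp1 a1 a2 b1 b2) = hp1 (reval xs a1) (reval xs a2) (reval xs b1) (reval xs b2)"
  "reval xs (e_hp2 a1 a2 b1 b2) = hp2 (reval xs a1) (reval xs a2) (reval xs b1) (reval xs b2)"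
  by (simp_all add: e_hp1_def e_hp2_def e_dp_def e_dm_def hp1_def hp2_def dpl_def dmi_def)

definition "e_sel a b c d = rif e_ca a (rif e_cb b (rif (e_g e_sxA) c d))"

lemma ev_sel: "reval (IX A B) (e_sel a b c d) =
   selr A B (reval (IX A B) a) (reval (IX A B) b) (reval (IX A B) c) (reval (IX A B) d)"
  by (simp add: e_sel_def ev_c selr_def)

definition "e_hx1 = e_hp1 (Inp 0) (Inp 2) (Inp 4) (Inp 6)"
definition "e_hx2 = e_hp2 (Inp 0) (Inp 2) (Inp 4) (Inp 6)"
definition "e_hy1 = e_hp1 (Inp 1) (Inp 3) (Inp 5) (Inp 7)"
definition "e_hy2 = e_hp2 (Inp 1) (Inp 3) (Inp 5) (Inp 7)"

lemma ev_h: "reval (IX A B) e_hx1 = hx1 A B" "reval (IX A B) e_hx2 = hx2 A B"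
  "reval (IX A B) e_hy1 = hy1 A B" "reval (IX A B) e_hy2 = hy2 A B"
  by (simp_all only: e_hx1_def e_hx2_def e_hy1_def e_hy2_def ev_hp reval_inp hx1_def hx2_def hy1_def hy2_def)

definition "e_c1x1 = e_sel (Inp 0) (Inp 4) (Inp 0) e_hx1"
definition "e_c1y1 = e_sel (Inp 5) (Inp 1) e_hy1 (Inp 1)"
definition "e_c1x2 = e_sel (Inp 2) (Inp 6) (Inp 2) e_hx2"
definition "e_c1y2 = e_sel (Inp 7) (Inp 3) e_hy2 (Inp 3)"
definition "e_c2x1 = e_sel (Inp 4) (Inp 4) (Inp 4) e_hx1"
definition "e_c2y1 = e_sel (Inp 5) (Inp 5) e_hy1 (Inp 5)"
definition "e_c2x2 = e_sel (Inp 6) (Inp 6) (Inp 6) e_hx2"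
definition "e_c2y2 = e_sel (Inp 7) (Inp 7) e_hy2 (Inp 7)"

lemma ev_C1: "reval (IX A B) e_c1x1 = fst (fst (C1 A B))" "reval (IX A B) e_c1y1 = snd (fst (C1 A B))"
  "reval (IX A B) e_c1x2 = fst (snd (C1 A B))" "reval (IX A B) e_c1y2 = snd (snd (C1 A B))"
  by (simp_all only: e_c1x1_def e_c1y1_def e_c1x2_def e_c1y2_def ev_sel ev_h reval_inp C1_def fst_conv snd_conv)

lemma ev_C2: "reval (IX A B) e_c2x1 = fst (fst (C2 A B))" "reval (IX A B) e_c2y1 = snd (fst (C2 A B))"
  "reval (IX A B) e_c2x2 = fst (snd (C2 A B))" "reval (IX A B) e_c2y2 = snd (snd (C2 A B))"
  by (simp_all only: e_c2x1_def e_c2y1_def e_c2x2_def e_c2y2_def ev_sel ev_h reval_inp C2_def fst_conv snd_conv)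

definition "e_seg x1 y1 x2 y2 x1' y1' x2' y2' =
   Add (Add (rabs (Sub x1' x1)) (rabs (Sub y1' y1))) (Add (rabs (Sub x2' x2)) (rabs (Sub y2' y2)))"

lemma ev_seg: "reval xs (e_seg x1 y1 x2 y2 x1' y1' x2' y2') =
   seglen ((reval xs x1, reval xs y1), (reval xs x2, reval xs y2)) ((reval xs x1', reval xs y1'), (reval xs x2', reval xs y2'))"
  by (simp add: e_seg_def seglen_def l1_def)

definition "e_t1 = Add (Cst 1) (e_seg (Inp 0) (Inp 1) (Inp 2) (Inp 3) e_c1x1 e_c1y1 e_c1x2 e_c1y2)"
definition "e_t2 = Add e_t1 (Add (Cst 1) (e_seg e_c1x1 e_c1y1 e_c1x2 e_c1y2 e_c2x1 e_c2y1 e_c2x2 e_c2y2))"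
definition "e_t3 = Add e_t2 (Add (Cst 1) (e_seg e_c2x1 e_c2y1 e_c2x2 e_c2y2 (Inp 4) (Inp 5) (Inp 6) (Inp 7)))"

lemma ev_t: "reval (IX A B) e_t1 = tm1 A B" "reval (IX A B) e_t2 = tm2 A B" "reval (IX A B) e_t3 = tm3 A B"
  by (simp_all add: e_t1_def e_t2_def e_t3_def ev_seg ev_C1 ev_C2 ix_nth tm1_def tm2_def tm3_def)

definition "W0 = [(Cst 0, Inp 0, Inp 1, Inp 2, Inp 3), (e_t1, e_c1x1, e_c1y1, e_c1x2, e_c1y2),
   (e_t2, e_c2x1, e_c2y1, e_c2x2, e_c2y2), (e_t3, Inp 4, Inp 5, Inp 6, Inp 7)]"

lemma run_W0: "run_waypoints W0 (IX A B) = wl A B"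
  by (simp add: W0_def run_waypoints_def wl_def ev_t ev_C1 ev_C2 ix_nth)

definition "P0 = rif (rmin e_ca e_cb)
   (Add (Add (rabs (Sub (Inp 0) (Inp 4))) (rabs (Sub (Inp 2) (Inp 6))))
        (Add (rabs (Sub (Inp 1) (Inp 5))) (rabs (Sub (Inp 3) (Inp 7)))))
   (Add (e_det (Inp 0) (Inp 2) (Inp 4) (Inp 6)) (e_det (Inp 1) (Inp 3) (Inp 5) (Inp 7)))"

lemma ev_P0: "reval (IX A B) P0 = optv A B"
  by (simp add: P0_def ev_c ev_det ix_nth optv_def dxx_def dyy_def ddx_def ddy_def)

lemma pl4_fst: "fst (pl_interp [(s0,c0),(s1,c1),(s2,c2),(s3,c3)] t) = pl_interp [(s0,fst c0),(s1,fst c1),(s2,fst c2),(s3,fst c3)] t"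
  by simp
lemma pl4_snd: "snd (pl_interp [(s0,c0),(s1,c1),(s2,c2),(s3,c3)] t) = pl_interp [(s0,snd c0),(s1,snd c1),(s2,snd c2),(s3,snd c3)] t"
  by simp

lemma sched_config:
  assumes s: "s0 < s1" "s1 < s2" "s2 < s3"
    and g: "segok c0 c1" "segok c1 c2" "segok c2 c3"
    and t: "s0 \<le> t" "t \<le> s3"
  shows "config2 (pl_interp [(s0,c0),(s1,c1),(s2,c2),(s3,c3)] t)"
proof -
  have u: "0 \<le> (t - a) / (b - a)" "(t - a) / (b - a) \<le> 1" if "a < b" "a \<le> t" "t \<le> b" for a b
    using that by (auto simp: divide_simps)
  consider "t \<le> s1" | "s1 \<le> t" "t \<le> s2" | "s2 \<le> t" by linarith
  thus ?thesis
  proof cases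
    case 1
    thus ?thesis using pl4_seg0[of s0 t s1 c0 c1 s2 c2 s3 c3] g(1) u[OF s(1)] t unfolding segok_def by auto
  next
    case 2
    thus ?thesis using pl4_seg1[OF s(1), of t s2 c0 c1 c2 s3 c3] g(2) u[OF s(2)] unfolding segok_def by auto
  next
    case 3
    thus ?thesis using pl4_seg2[OF s(1) s(2), of t s3 c0 c1 c2 c3] g(3) u[OF s(3)] t unfolding segok_def by auto
  qed
qed

lemma segok_xe: "sx C = sx D \<Longrightarrow> 1 \<le> \<bar>sx C\<bar> \<Longrightarrow> segok C D"
  by (rule segok_x) auto
lemma segok_ye: "sy C = sy D \<Longrightarrow> 1 \<le> \<bar>sy C\<bar> \<Longrightarrow> segok C D"
  by (rule segok_y) auto

lemma kx_iff: "kx A B \<le> 0 \<longleftrightarrow> ((1 \<le> sx A \<and> 1 \<le> sx B) \<or> (sx A \<le> -1 \<and> sx B \<le> -1))"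
  unfolding kx_def by auto
lemma ky_iff: "ky A B \<le> 0 \<longleftrightarrow> ((1 \<le> sy A \<and> 1 \<le> sy B) \<or> (sy A \<le> -1 \<and> sy B \<le> -1))"
  unfolding ky_def by auto
lemma gx_iff: "gx C \<le> 0 \<longleftrightarrow> 1 \<le> \<bar>sx C\<bar>" unfolding gx_def by auto
lemma gy_iff: "gy C \<le> 0 \<longleftrightarrow> 1 \<le> \<bar>sy C\<bar>" unfolding gy_def by auto

lemma sx_tup[simp]: "sx ((a,b),(c,d)) = a - c" by (simp add: sx_def)
lemma sy_tup[simp]: "sy ((a,b),(c,d)) = b - d" by (simp add: sy_def)

lemma plan_cases:
  fixes ax1 ay1 ax2 ay2 bx1 by1 bx2 by2 :: real
  defines "A \<equiv> ((ax1,ay1),(ax2,ay2))" and "B \<equiv> ((bx1,by1),(bx2,by2))"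
  assumes cA: "config2 A" and cB: "config2 B"
  shows "segok A (C1 A B) \<and> segok (C1 A B) (C2 A B) \<and> segok (C2 A B) B \<and>
         seglen A (C1 A B) + seglen (C1 A B) (C2 A B) + seglen (C2 A B) B = optv A B"
proof -
  have cA': "1 \<le> \<bar>ax1 - ax2\<bar> \<or> 1 \<le> \<bar>ay1 - ay2\<bar>" using cA unfolding config2_iff A_def by simp
  have cB': "1 \<le> \<bar>bx1 - bx2\<bar> \<or> 1 \<le> \<bar>by1 - by2\<bar>" using cB unfolding config2_iff B_def by simp
  have sxA: "sx A = ax1 - ax2" and sxB: "sx B = bx1 - bx2" and syA: "sy A = ay1 - ay2" and syB: "sy B = by1 - by2"
    by (simp_all add: A_def B_def)
  have ca_iff: "ca A B \<le> 0 \<longleftrightarrow> gx A \<le> 0 \<and> (gy B \<le> 0 \<or> kx A B \<le> 0)" unfolding ca_def by auto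
  have cb_iff: "cb A B \<le> 0 \<longleftrightarrow> gy A \<le> 0 \<and> (gx B \<le> 0 \<or> ky A B \<le> 0)" unfolding cb_def by auto
  note iffs = gx_iff gy_iff kx_iff ky_iff sxA sxB syA syB
  have seq: "seglen ((a1,b1),(a2,b2)) ((c1,d1),(c2,d2)) = \<bar>c1 - a1\<bar> + \<bar>d1 - b1\<bar> + (\<bar>c2 - a2\<bar> + \<bar>d2 - b2\<bar>)"
    for a1 b1 a2 b2 c1 d1 c2 d2 :: real by (simp add: seglen_def l1_def)
  have dx: "dxx A B = \<bar>bx1 - ax1\<bar> + \<bar>bx2 - ax2\<bar>" by (simp add: dxx_def A_def B_def abs_minus_commute)
  have dy: "dyy A B = \<bar>by1 - ay1\<bar> + \<bar>by2 - ay2\<bar>" by (simp add: dyy_def A_def B_def abs_minus_commute)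
  consider (a) "ca A B \<le> 0" | (b) "\<not> ca A B \<le> 0" "cb A B \<le> 0"
    | (c) "\<not> ca A B \<le> 0" "\<not> cb A B \<le> 0" "gx A \<le> 0"
    | (d) "\<not> ca A B \<le> 0" "\<not> cb A B \<le> 0" "\<not> gx A \<le> 0" by blast
  thus ?thesis
  proof cases
    case a
    have e1: "C1 A B = ((ax1, by1), (ax2, by2))" and e2: "C2 A B = B"
      using a by (simp_all add: C1_def C2_def selr_def A_def B_def)
    have o: "optv A B = dxx A B + dyy A B" using a by (simp add: optv_def min_le_iff_disj)
    have h: "1 \<le> \<bar>ax1 - ax2\<bar>" "1 \<le> \<bar>by1 - by2\<bar> \<or> ((1 \<le> ax1 - ax2 \<and> 1 \<le> bx1 - bx2) \<or> (ax1 - ax2 \<le> -1 \<and> bx1 - bx2 \<le> -1))"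
      using a unfolding ca_iff iffs by auto
    have s0: "segok A (C1 A B)" unfolding e1 unfolding A_def by (rule segok_xe) (use h in auto)
    have s1: "segok (C1 A B) (C2 A B)" unfolding e1 e2 unfolding B_def using h(2)
    proof
      assume "1 \<le> \<bar>by1 - by2\<bar>" thus "segok ((ax1, by1), ax2, by2) ((bx1, by1), bx2, by2)" by (intro segok_ye) auto
    next
      assume "(1 \<le> ax1 - ax2 \<and> 1 \<le> bx1 - bx2) \<or> (ax1 - ax2 \<le> -1 \<and> bx1 - bx2 \<le> -1)"
      thus "segok ((ax1, by1), ax2, by2) ((bx1, by1), bx2, by2)" by (intro segok_x) auto
    qed
    have s2: "segok (C2 A B) B" unfolding e2 by (rule segok_const[OF cB])
    have q0: "seglen A (C1 A B) = \<bar>by1 - ay1\<bar> + \<bar>by2 - ay2\<bar>" unfolding e1 unfolding A_def seq by simp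
    have q1: "seglen (C1 A B) (C2 A B) = \<bar>bx1 - ax1\<bar> + \<bar>bx2 - ax2\<bar>" unfolding e1 e2 unfolding B_def seq by simp
    have q2: "seglen (C2 A B) B = 0" unfolding e2 unfolding B_def seq by simp
    have cost: "seglen A (C1 A B) + seglen (C1 A B) (C2 A B) + seglen (C2 A B) B = optv A B"
      using o dx dy q0 q1 q2 by linarith
    show ?thesis using s0 s1 s2 cost by blast
  next
    case b
    have e1: "C1 A B = ((bx1, ay1), (bx2, ay2))" and e2: "C2 A B = B"
      using b by (simp_all add: C1_def C2_def selr_def A_def B_def)
    have o: "optv A B = dxx A B + dyy A B" using b by (simp add: optv_def min_le_iff_disj)
    have h: "1 \<le> \<bar>ay1 - ay2\<bar>" "1 \<le> \<bar>bx1 - bx2\<bar> \<or> ((1 \<le> ay1 - ay2 \<and> 1 \<le> by1 - by2) \<or> (ay1 - ay2 \<le> -1 \<and> by1 - by2 \<le> -1))"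
      using b unfolding cb_iff iffs by auto
    have s0: "segok A (C1 A B)" unfolding e1 unfolding A_def by (rule segok_ye) (use h in auto)
    have s1: "segok (C1 A B) (C2 A B)" unfolding e1 e2 unfolding B_def using h(2)
    proof
      assume "1 \<le> \<bar>bx1 - bx2\<bar>" thus "segok ((bx1, ay1), bx2, ay2) ((bx1, by1), bx2, by2)" by (intro segok_xe) auto
    next
      assume "(1 \<le> ay1 - ay2 \<and> 1 \<le> by1 - by2) \<or> (ay1 - ay2 \<le> -1 \<and> by1 - by2 \<le> -1)"
      thus "segok ((bx1, ay1), bx2, ay2) ((bx1, by1), bx2, by2)" by (intro segok_y) auto
    qed
    have s2: "segok (C2 A B) B" unfolding e2 by (rule segok_const[OF cB])
    have q0: "seglen A (C1 A B) = \<bar>bx1 - ax1\<bar> + \<bar>bx2 - ax2\<bar>" unfolding e1 unfolding A_def seq by simp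
    have q1: "seglen (C1 A B) (C2 A B) = \<bar>by1 - ay1\<bar> + \<bar>by2 - ay2\<bar>" unfolding e1 e2 unfolding B_def seq by simp
    have q2: "seglen (C2 A B) B = 0" unfolding e2 unfolding B_def seq by simp
    have cost: "seglen A (C1 A B) + seglen (C1 A B) (C2 A B) + seglen (C2 A B) B = optv A B"
      using o dx dy q0 q1 q2 by linarith
    show ?thesis using s0 s1 s2 cost by blast
  next
    case c
    define h1 where "h1 = hp1 ay1 ay2 by1 by2"
    define h2 where "h2 = hp2 ay1 ay2 by1 by2"
    have e1: "C1 A B = ((ax1, h1), (ax2, h2))" and e2: "C2 A B = ((bx1, h1), (bx2, h2))"
      using c by (simp_all add: C1_def C2_def selr_def A_def B_def h1_def h2_def hy1_def hy2_def)
    have o: "optv A B = ddx A B + ddy A B" using c by (simp add: optv_def min_le_iff_disj)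
    have hA: "1 \<le> \<bar>ax1 - ax2\<bar>" using c unfolding iffs by auto
    have "\<not> gy B \<le> 0" using c hA unfolding ca_iff iffs by auto
    hence hB: "1 \<le> \<bar>bx1 - bx2\<bar>" using cB' unfolding iffs by auto
    have hh: "1 \<le> \<bar>h1 - h2\<bar>" unfolding h1_def h2_def by (rule hp_sep)
    have s0: "segok A (C1 A B)" unfolding e1 unfolding A_def by (rule segok_xe) (use hA in auto)
    have s1: "segok (C1 A B) (C2 A B)" unfolding e1 e2 by (rule segok_ye) (use hh in auto)
    have s2: "segok (C2 A B) B" unfolding e2 unfolding B_def by (rule segok_xe) (use hB in auto)
    have "ddx A B = detour ax1 ax2 bx1 bx2" by (simp add: ddx_def A_def B_def)
    hence ddx: "ddx A B = \<bar>bx1 - ax1\<bar> + \<bar>bx2 - ax2\<bar>"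
      using detour_zero[OF hA, of bx1 bx2] abs_minus_commute[of ax1 bx1] abs_minus_commute[of ax2 bx2] by linarith
    have "ddy A B = detour ay1 ay2 by1 by2" by (simp add: ddy_def A_def B_def)
    hence ddy: "ddy A B = \<bar>h1 - ay1\<bar> + \<bar>by1 - h1\<bar> + \<bar>h2 - ay2\<bar> + \<bar>by2 - h2\<bar>"
      using hp_cost[of ay1 ay2 by1 by2] unfolding h1_def h2_def by linarith
    have q0: "seglen A (C1 A B) = \<bar>h1 - ay1\<bar> + \<bar>h2 - ay2\<bar>" unfolding e1 unfolding A_def seq by simp
    have q1: "seglen (C1 A B) (C2 A B) = \<bar>bx1 - ax1\<bar> + \<bar>bx2 - ax2\<bar>" unfolding e1 e2 seq by simp
    have q2: "seglen (C2 A B) B = \<bar>by1 - h1\<bar> + \<bar>by2 - h2\<bar>" unfolding e2 unfolding B_def seq by simp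
    have cost: "seglen A (C1 A B) + seglen (C1 A B) (C2 A B) + seglen (C2 A B) B = optv A B"
      using o ddx ddy q0 q1 q2 by linarith
    show ?thesis using s0 s1 s2 cost by blast
  next
    case d
    define g1 where "g1 = hp1 ax1 ax2 bx1 bx2"
    define g2 where "g2 = hp2 ax1 ax2 bx1 bx2"
    have e1: "C1 A B = ((g1, ay1), (g2, ay2))" and e2: "C2 A B = ((g1, by1), (g2, by2))"
      using d by (simp_all add: C1_def C2_def selr_def A_def B_def g1_def g2_def hx1_def hx2_def)
    have o: "optv A B = ddx A B + ddy A B" using d by (simp add: optv_def min_le_iff_disj)
    have hA: "1 \<le> \<bar>ay1 - ay2\<bar>" using d cA' unfolding iffs by auto
    have "\<not> gx B \<le> 0" using d hA unfolding cb_iff iffs by auto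
    hence hB: "1 \<le> \<bar>by1 - by2\<bar>" using cB' unfolding iffs by auto
    have hh: "1 \<le> \<bar>g1 - g2\<bar>" unfolding g1_def g2_def by (rule hp_sep)
    have s0: "segok A (C1 A B)" unfolding e1 unfolding A_def by (rule segok_ye) (use hA in auto)
    have s1: "segok (C1 A B) (C2 A B)" unfolding e1 e2 by (rule segok_xe) (use hh in auto)
    have s2: "segok (C2 A B) B" unfolding e2 unfolding B_def by (rule segok_ye) (use hB in auto)
    have "ddy A B = detour ay1 ay2 by1 by2" by (simp add: ddy_def A_def B_def)
    hence ddy: "ddy A B = \<bar>by1 - ay1\<bar> + \<bar>by2 - ay2\<bar>"
      using detour_zero[OF hA, of by1 by2] abs_minus_commute[of ay1 by1] abs_minus_commute[of ay2 by2] by linarith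
    have "ddx A B = detour ax1 ax2 bx1 bx2" by (simp add: ddx_def A_def B_def)
    hence ddx: "ddx A B = \<bar>g1 - ax1\<bar> + \<bar>bx1 - g1\<bar> + \<bar>g2 - ax2\<bar> + \<bar>bx2 - g2\<bar>"
      using hp_cost[of ax1 ax2 bx1 bx2] unfolding g1_def g2_def by linarith
    have q0: "seglen A (C1 A B) = \<bar>g1 - ax1\<bar> + \<bar>g2 - ax2\<bar>" unfolding e1 unfolding A_def seq by simp
    have q1: "seglen (C1 A B) (C2 A B) = \<bar>by1 - ay1\<bar> + \<bar>by2 - ay2\<bar>" unfolding e1 e2 seq by simp
    have q2: "seglen (C2 A B) B = \<bar>bx1 - g1\<bar> + \<bar>bx2 - g2\<bar>" unfolding e2 unfolding B_def seq by simp
    have cost: "seglen A (C1 A B) + seglen (C1 A B) (C2 A B) + seglen (C2 A B) B = optv A B"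
      using o ddx ddy q0 q1 q2 by linarith
    show ?thesis using s0 s1 s2 cost by blast
  qed
qed

lemma plan_ok:
  assumes cA: "config2 A" and cB: "config2 B"
  shows "segok A (C1 A B) \<and> segok (C1 A B) (C2 A B) \<and> segok (C2 A B) B \<and>
         seglen A (C1 A B) + seglen (C1 A B) (C2 A B) + seglen (C2 A B) B = optv A B"
proof -
  obtain ax1 ay1 ax2 ay2 where A: "A = ((ax1,ay1),(ax2,ay2))" by (metis prod.collapse)
  obtain bx1 by1 bx2 by2 where B: "B = ((bx1,by1),(bx2,by2))" by (metis prod.collapse)
  show ?thesis using plan_cases[of ax1 ay1 ax2 ay2 bx1 by1 bx2 by2] cA cB unfolding A B by blast
qed

lemma K_abs: "((1 \<le> a \<and> 1 \<le> b) \<or> (a \<le> -1 \<and> b \<le> -1)) \<Longrightarrow> 1 \<le> \<bar>a::real\<bar>" by auto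

lemma lb_opt:
  assumes cA: "config2 A" and cB: "config2 B" and F: "feasible_schedule2 A B t0 t1 m1 m2"
  shows "optv A B \<le> total_len2 t0 t1 m1 m2"
proof (cases "min (ca A B) (cb A B) \<le> 0")
  case True
  have e1: "l1 (fst B - fst A) = \<bar>fst (fst B) - fst (fst A)\<bar> + \<bar>snd (fst B) - snd (fst A)\<bar>"
    by (simp add: l1_def)
  have e2: "l1 (snd B - snd A) = \<bar>fst (snd B) - fst (snd A)\<bar> + \<bar>snd (snd B) - snd (snd A)\<bar>"
    by (simp add: l1_def)
  have o: "optv A B = dxx A B + dyy A B" using True by (simp add: optv_def)
  have "optv A B = l1 (fst B - fst A) + l1 (snd B - snd A)"
    using o e1 e2 abs_minus_commute[of "fst (fst A)" "fst (fst B)"] abs_minus_commute[of "snd (fst A)" "snd (fst B)"]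
      abs_minus_commute[of "fst (snd A)" "fst (snd B)"] abs_minus_commute[of "snd (snd A)" "snd (snd B)"]
    unfolding dxx_def dyy_def by linarith
  thus ?thesis using lb_basic[OF F] by simp
next
  case False
  hence nca: "\<not> ca A B \<le> 0" and ncb: "\<not> cb A B \<le> 0" by (auto simp: min_le_iff_disj)
  have nKx: "\<not> ((1 \<le> sx A \<and> 1 \<le> sx B) \<or> (sx A \<le> -1 \<and> sx B \<le> -1))"
  proof
    assume K: "(1 \<le> sx A \<and> 1 \<le> sx B) \<or> (sx A \<le> -1 \<and> sx B \<le> -1)"
    have "gx A \<le> 0" unfolding gx_iff by (rule K_abs[OF K])
    moreover have "kx A B \<le> 0" unfolding kx_iff by (rule K)
    ultimately have "ca A B \<le> 0" unfolding ca_def by simp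
    thus False using nca by simp
  qed
  have nKy: "\<not> ((1 \<le> sy A \<and> 1 \<le> sy B) \<or> (sy A \<le> -1 \<and> sy B \<le> -1))"
  proof
    assume K: "(1 \<le> sy A \<and> 1 \<le> sy B) \<or> (sy A \<le> -1 \<and> sy B \<le> -1)"
    have "gy A \<le> 0" unfolding gy_iff by (rule K_abs[OF K])
    moreover have "ky A B \<le> 0" unfolding ky_iff by (rule K)
    ultimately have "cb A B \<le> 0" unfolding cb_def by simp
    thus False using ncb by simp
  qed
  have "optv A B = ddx A B + ddy A B" using False by (simp add: optv_def)
  thus ?thesis using lb_detour[OF F nKx nKy] unfolding ddx_def ddy_def by simp
qed

lemma seglen_nonneg: "0 \<le> seglen C D" unfolding seglen_def using l1_nonneg[of "fst D - fst C"] l1_nonneg[of "snd D - snd C"] by linarith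

lemma main_inst:
  assumes cA: "config2 A" and cB: "config2 B"
  defines "m1 \<equiv> \<lambda>t. fst (pl_interp (wl A B) t)" and "m2 \<equiv> \<lambda>t. snd (pl_interp (wl A B) t)"
  shows "feasible_schedule2 A B 0 (tm3 A B) m1 m2 \<and> total_len2 0 (tm3 A B) m1 m2 = optv A B
     \<and> minsum_opt2 A B = optv A B"
proof -
  note P = plan_ok[OF cA cB]
  have P1: "segok A (C1 A B)" and P2: "segok (C1 A B) (C2 A B)" and P3: "segok (C2 A B) B"
    and Pc: "seglen A (C1 A B) + seglen (C1 A B) (C2 A B) + seglen (C2 A B) B = optv A B"
    using P by blast+
  define s1 where "s1 = tm1 A B"
  define s2 where "s2 = tm2 A B"
  define s3 where "s3 = tm3 A B"
  have l0: "l1 (fst (C1 A B) - fst A) \<le> s1 - 0" "l1 (snd (C1 A B) - snd A) \<le> s1 - 0"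
    unfolding s1_def tm1_def seglen_def using l1_nonneg[of "fst (C1 A B) - fst A"] l1_nonneg[of "snd (C1 A B) - snd A"] by linarith+
  have l1': "l1 (fst (C2 A B) - fst (C1 A B)) \<le> s2 - s1" "l1 (snd (C2 A B) - snd (C1 A B)) \<le> s2 - s1"
    unfolding s1_def s2_def tm2_def seglen_def
    using l1_nonneg[of "fst (C2 A B) - fst (C1 A B)"] l1_nonneg[of "snd (C2 A B) - snd (C1 A B)"] by linarith+
  have l2: "l1 (fst B - fst (C2 A B)) \<le> s3 - s2" "l1 (snd B - snd (C2 A B)) \<le> s3 - s2"
    unfolding s3_def s2_def tm3_def seglen_def
    using l1_nonneg[of "fst B - fst (C2 A B)"] l1_nonneg[of "snd B - snd (C2 A B)"] by linarith+
  have s: "0 < s1" "s1 < s2" "s2 < s3"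
    unfolding s1_def s2_def s3_def tm1_def tm2_def tm3_def
    using seglen_nonneg[of A "C1 A B"] seglen_nonneg[of "C1 A B" "C2 A B"] seglen_nonneg[of "C2 A B" B] by linarith+
  have w: "wl A B = [(0, A), (s1, C1 A B), (s2, C2 A B), (s3, B)]" unfolding wl_def s1_def s2_def s3_def ..
  have m1: "m1 = pl_interp [(0, fst A), (s1, fst (C1 A B)), (s2, fst (C2 A B)), (s3, fst B)]"
    unfolding m1_def w pl4_fst ..
  have m2: "m2 = pl_interp [(0, snd A), (s1, snd (C1 A B)), (s2, snd (C2 A B)), (s3, snd B)]"
    unfolding m2_def w pl4_snd ..
  have T1: "trajectory 0 s3 m1" unfolding m1 by (rule pl4_props(1)[OF s l0(1) l1'(1) l2(1)])
  have PL1: "path_len 0 s3 m1 \<le> l1 (fst (C1 A B) - fst A) + l1 (fst (C2 A B) - fst (C1 A B)) + l1 (fst B - fst (C2 A B))"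
    unfolding m1 by (rule pl4_props(2)[OF s l0(1) l1'(1) l2(1)])
  have T2: "trajectory 0 s3 m2" unfolding m2 by (rule pl4_props(1)[OF s l0(2) l1'(2) l2(2)])
  have PL2: "path_len 0 s3 m2 \<le> l1 (snd (C1 A B) - snd A) + l1 (snd (C2 A B) - snd (C1 A B)) + l1 (snd B - snd (C2 A B))"
    unfolding m2 by (rule pl4_props(2)[OF s l0(2) l1'(2) l2(2)])
  have cfg: "\<forall>t\<in>{0..s3}. config2 (m1 t, m2 t)"
  proof
    fix t assume t: "t \<in> {0..s3}"
    have "config2 (pl_interp (wl A B) t)" unfolding w
      by (rule sched_config[OF s P1 P2 P3]) (use t in auto)
    thus "config2 (m1 t, m2 t)" unfolding m1_def m2_def by simp
  qed
  have e0: "pl_interp (wl A B) 0 = A" unfolding w using s by simp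
  have e3: "pl_interp (wl A B) s3 = B" unfolding w using pl4_seg2[of 0 s1 s2 s3 s3 A "C1 A B" "C2 A B" B] s by simp
  have F: "feasible_schedule2 A B 0 s3 m1 m2"
    unfolding feasible_schedule2_def
  proof (intro conjI)
    show "trajectory 0 s3 m1" by (rule T1)
    show "trajectory 0 s3 m2" by (rule T2)
    show "\<forall>t\<in>{0..s3}. config2 (m1 t, m2 t)" by (rule cfg)
    show "m1 0 = fst A" unfolding m1_def using e0 by simp
    show "m2 0 = snd A" unfolding m2_def using e0 by simp
    show "m1 s3 = fst B" unfolding m1_def using e3 by simp
    show "m2 s3 = snd B" unfolding m2_def using e3 by simp
  qed
  have up: "total_len2 0 s3 m1 m2 \<le> optv A B"
    using PL1 PL2 Pc unfolding total_len2_def seglen_def by linarith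
  have lo: "optv A B \<le> total_len2 0 s3 m1 m2" by (rule lb_opt[OF cA cB F])
  have tot: "total_len2 0 s3 m1 m2 = optv A B" using up lo by linarith
  have mo: "minsum_opt2 A B = optv A B"
    unfolding minsum_opt2_def
  proof (rule cInf_eq_minimum)
    have "total_len2 0 s3 m1 m2 \<in> {total_len2 t0 t1 m1 m2 |t0 t1 m1 m2. feasible_schedule2 A B t0 t1 m1 m2}"
      using F by blast
    thus "optv A B \<in> {total_len2 t0 t1 m1 m2 |t0 t1 m1 m2. feasible_schedule2 A B t0 t1 m1 m2}"
      unfolding tot .
    fix x assume "x \<in> {total_len2 t0 t1 m1 m2 |t0 t1 m1 m2. feasible_schedule2 A B t0 t1 m1 m2}"
    thus "optv A B \<le> x" using lb_opt[OF cA cB] by blast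
  qed
  have F': "feasible_schedule2 A B 0 (tm3 A B) m1 m2" using F unfolding s3_def .
  have tot': "total_len2 0 (tm3 A B) m1 m2 = optv A B" using tot unfolding s3_def .
  show ?thesis using F' tot' mo by blast
qed

theorem theorem3p5:
  shows "\<exists>(P :: rexp) (W :: (rexp \<times> rexp \<times> rexp \<times> rexp \<times> rexp) list).
    \<forall>A B. config2 A \<and> config2 B \<longrightarrow>
      (let xs = inst_input A B;
           wl = run_waypoints W xs;
           t0 = fst (hd wl); t1 = fst (last wl);
           m1 = (\<lambda>t. fst (pl_interp wl t));
           m2 = (\<lambda>t. snd (pl_interp wl t))
       in reval xs P = minsum_opt2 A B \<and>
          wl \<noteq> [] \<and> sorted_wrt (<) (map fst wl) \<and>
          feasible_schedule2 A B t0 t1 m1 m2 \<and>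
          total_len2 t0 t1 m1 m2 = minsum_opt2 A B)"
proof (intro exI allI impI)
  fix A B :: "pt \<times> pt"
  assume c: "config2 A \<and> config2 B"
  note M = main_inst[OF conjunct1[OF c] conjunct2[OF c]]
  have pos: "0 < tm1 A B" "tm1 A B < tm2 A B" "tm2 A B < tm3 A B"
    unfolding tm1_def tm2_def tm3_def
    using seglen_nonneg[of A "C1 A B"] seglen_nonneg[of "C1 A B" "C2 A B"] seglen_nonneg[of "C2 A B" B] by linarith+
  have ne: "wl A B \<noteq> []" and hd: "fst (hd (wl A B)) = 0" and la: "fst (last (wl A B)) = tm3 A B"
    by (simp_all add: wl_def)
  have so: "sorted_wrt (<) (map fst (wl A B))" using pos by (simp add: wl_def)
  have M1: "feasible_schedule2 A B 0 (tm3 A B) (\<lambda>t. fst (pl_interp (wl A B) t)) (\<lambda>t. snd (pl_interp (wl A B) t))"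
    and M2: "total_len2 0 (tm3 A B) (\<lambda>t. fst (pl_interp (wl A B) t)) (\<lambda>t. snd (pl_interp (wl A B) t)) = optv A B"
    and M3: "minsum_opt2 A B = optv A B"
    using M by blast+
  show "let xs = inst_input A B;
           wl = run_waypoints W0 xs;
           t0 = fst (hd wl); t1 = fst (last wl);
           m1 = (\<lambda>t. fst (pl_interp wl t));
           m2 = (\<lambda>t. snd (pl_interp wl t))
       in reval xs P0 = minsum_opt2 A B \<and>
          wl \<noteq> [] \<and> sorted_wrt (<) (map fst wl) \<and>
          feasible_schedule2 A B t0 t1 m1 m2 \<and>
          total_len2 t0 t1 m1 m2 = minsum_opt2 A B"
    unfolding Let_def run_W0 ev_P0 hd la M3 using ne so M1 M2 by (intro conjI refl)
qed

end
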